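(* Let $K\ge 3$, $T\subseteq[K]$ with $|T|=N$, let ${\bm{x}}_1,\dots,{\bm{x}}_K\in\mathbb{R}^d$ and $z_1,\dots,z_K\in\mathbb{R}$, and suppose there is ${\bm{a}}\in\mathbb{R}^d$ with ${\bm{a}}^T{\bm{x}}_1 < {\bm{a}}^T{\bm{x}}_2 < \cdots < {\bm{a}}^T{\bm{x}}_K$. Then there exist $m$ with $$ m \le K-1-\sum_{P\in\mathcal{P}([K]\setminus T)} \max\{|P|-2,0\}$$ and parameters ${\bm{W}}_2\in\mathbb{R}^{1\times m}$, ${\bm{b}}_1\in\mathbb{R}^m$, $b_2\in\mathbb{R}$ such that the network $g({\bm{x}}) = {\bm{W}}_2\sigma(\mathbf{1}_m{\bm{a}}^T{\bm{x}} + {\bm{b}}_1)+b_2$ satisfies $g({\bm{x}}_i)=z_i$ for all $i\in T$ and $g({\bm{x}}_i)=0$ for all $i\in[K]\setminus T$.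
   Context: $[K]=\{1,\dots,K\}$; $\sigma(t)=\max\{t,0\}$ applied coordinatewise; $\mathbf{1}_m\in\mathbb{R}^m$ is the all-ones vector. For $I\subseteq[K]$, the consecutive partition $\mathcal{P}(I)$ is the partition of $I$ into maximal subsets of consecutive integers (e.g. $\mathcal{P}(\{1,2,3,5,6,8,10,11,12,13\}) = \{\{1,2,3\},\{5,6\},\{8\},\{10,11,12,13\}\}$). *)

theory Defs
  imports "HOL-Analysis.Analysis"
begin

definition consec_partition :: "nat set \<Rightarrow> nat set set" where
  "consec_partition I =
     {{l..u} | l u. l \<le> u \<and> {l..u} \<subseteq> I \<and> (0 < l \<longrightarrow> l - 1 \<notin> I) \<and> Suc u \<notin> I}"

definition relu :: "real \<Rightarrow> real" where
  "relu t = max t 0"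

definition net :: "nat \<Rightarrow> (nat \<Rightarrow> real) \<Rightarrow> (nat \<Rightarrow> real) \<Rightarrow> real \<Rightarrow> ('a::real_inner) \<Rightarrow> 'a \<Rightarrow> real" where
  "net m W2 b1 b2 a x = (\<Sum>j<m. W2 j * relu (a \<bullet> x + b1 j)) + b2"

end

theory Submission
  imports Defs
begin

lemma cp_elem:
  assumes "P \<in> consec_partition I"
  obtains l u where "P = {l..u}" "l \<le> u" "{l..u} \<subseteq> I" "0 < l \<Longrightarrow> l - 1 \<notin> I" "Suc u \<notin> I"
  using assms unfolding consec_partition_def by blast

lemma cp_disj:
  assumes "P \<in> consec_partition I" "Q \<in> consec_partition I" "P \<noteq> Q"
  shows "P \<inter> Q = {}"
proof -
  obtain l u where P: "P = {l..u}" "l \<le> u" "{l..u} \<subseteq> I" "0 < l \<Longrightarrow> l - 1 \<notin> I" "Suc u \<notin> I"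
    using cp_elem[OF assms(1)] by blast
  obtain l' u' where Q: "Q = {l'..u'}" "l' \<le> u'" "{l'..u'} \<subseteq> I" "0 < l' \<Longrightarrow> l' - 1 \<notin> I" "Suc u' \<notin> I"
    using cp_elem[OF assms(2)] by blast
  show ?thesis
  proof (rule ccontr)
    assume "P \<inter> Q \<noteq> {}"
    then obtain j where j: "l \<le> j" "j \<le> u" "l' \<le> j" "j \<le> u'" using P Q by auto
    consider "l < l'" | "l' < l" | "l = l' \<and> u < u'" | "l = l' \<and> u' < u" | "l = l' \<and> u = u'" by linarith
    then show False
    proof cases
      case 1 then have "l' - 1 \<in> {l..u}" using j by auto
      then have "l' - 1 \<in> I" using P by blast
      then show False using Q 1 by auto
    next
      case 2 then have "l - 1 \<in> {l'..u'}" using j by auto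
      then have "l - 1 \<in> I" using Q by blast
      then show False using P 2 by auto
    next
      case 3 then have "Suc u \<in> {l'..u'}" using j by auto
      then have "Suc u \<in> I" using Q by blast
      then show False using P by auto
    next
      case 4 then have "Suc u' \<in> {l..u}" using j by auto
      then have "Suc u' \<in> I" using P by blast
      then show False using Q by auto
    next
      case 5 then show False using P Q assms(3) by auto
    qed
  qed
qed

lemma card_inner:
  fixes l u :: nat
  assumes "P = {l..u}" "l \<le> u"
  shows "int (card (P - {Min P, Max P})) = max (int (card P) - 2) 0"
proof -
  have "Min P = l" using assms by (intro Min_eqI) auto
  moreover have "Max P = u" using assms by (intro Max_eqI) auto
  ultimately have "P - {Min P, Max P} = {l<..<u}" using assms by auto
  then show ?thesis using assms by auto
qed

theorem theorem4p6:
  fixes K :: nat and T :: "nat set"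
    and x :: "nat \<Rightarrow> real ^ 'd" and z :: "nat \<Rightarrow> real" and a :: "real ^ 'd"
  assumes "K \<ge> 3"
    and "T \<subseteq> {1..K}"
    and "\<And>i. 1 \<le> i \<Longrightarrow> i < K \<Longrightarrow> a \<bullet> x i < a \<bullet> x (Suc i)"
  shows "\<exists>m W2 b1 b2.
           int m \<le> int K - 1 - (\<Sum>P\<in>consec_partition ({1..K} - T). max (int (card P) - 2) 0)
         \<and> (\<forall>i\<in>T. net m W2 b1 b2 a (x i) = z i)
         \<and> (\<forall>i\<in>{1..K} - T. net m W2 b1 b2 a (x i) = 0)"
proof -
  define t where "t i = a \<bullet> x i" for i
  define y where "y i = (if i \<in> T then z i else 0)" for i
  define s where "s j = (if j = 0 then 0 else (y (Suc j) - y j) / (t (Suc j) - t j))" for j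
  define c where "c j = s j - s (j - 1)" for j
  define I where "I = {1..K} - T"
  define Z where "Z = {j. 2 \<le> j \<and> j \<le> K - 1 \<and> j - 1 \<in> I \<and> j \<in> I \<and> Suc j \<in> I}"
  define J where "J = {1..K-1} - Z"
  have tinc: "t i < t (Suc i)" if "1 \<le> i" "i < K" for i using assms(3)[OF that] t_def by simp
  have tel: "(\<Sum>j\<in>{1..<i}. c j) = s (i - 1)" if "i \<ge> 1" for i
    using that
  proof (induction i rule: dec_induct)
    case base then show ?case by (simp add: s_def)
  next
    case (step n) then show ?case by (simp add: c_def)
  qed
  have H: "y 1 + (\<Sum>j\<in>{1..<i}. c j * (t i - t j)) = y i" if "1 \<le> i" "i \<le> K" for i
    using that
  proof (induction i rule: dec_induct)
    case base then show ?case by simp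
  next
    case (step n)
    have "(\<Sum>j\<in>{1..<Suc n}. c j * (t (Suc n) - t j))
        = (\<Sum>j\<in>{1..<Suc n}. c j * (t (Suc n) - t n) + c j * (t n - t j))"
      by (rule sum.cong) (auto simp: algebra_simps)
    also have "\<dots> = (t (Suc n) - t n) * (\<Sum>j\<in>{1..<Suc n}. c j) + (\<Sum>j\<in>{1..<Suc n}. c j * (t n - t j))"
      unfolding sum.distrib sum_distrib_left by (simp add: mult.commute)
    also have "(\<Sum>j\<in>{1..<Suc n}. c j * (t n - t j)) = (\<Sum>j\<in>{1..<n}. c j * (t n - t j))"
      using step by (simp add: sum.atLeastLessThan_Suc)
    also have "(\<Sum>j\<in>{1..<Suc n}. c j) = s n" using tel[of "Suc n"] by simp
    also have "(t (Suc n) - t n) * s n = y (Suc n) - y n"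
      using tinc[of n] step by (simp add: s_def)
    finally show ?case using step by simp
  qed
  have cZ: "c j = 0" if "j \<in> Z" for j
  proof -
    have "y (j-1) = 0" "y j = 0" "y (Suc j) = 0" using that unfolding Z_def I_def y_def by auto
    moreover have "Suc (j - 1) = j" "j - 1 \<noteq> 0" using that unfolding Z_def by auto
    ultimately show ?thesis unfolding c_def s_def by (metis diff_self div_0)
  qed
  have finJ: "finite J" unfolding J_def by simp
  obtain e where e: "bij_betw e {0..<card J} J" using ex_bij_betw_nat_finite[OF finJ] by blast
  define m where "m = card J"
  define W2 where "W2 k = c (e k)" for k
  define b1 where "b1 k = - t (e k)" for k
  have netv: "net m W2 b1 (y 1) a (x i) = y i" if "1 \<le> i" "i \<le> K" for i
  proof -
    have "net m W2 b1 (y 1) a (x i) = (\<Sum>j\<in>J. c j * relu (t i - t j)) + y 1"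
      unfolding net_def m_def W2_def b1_def t_def
      using sum.reindex_bij_betw[OF e, of "\<lambda>j. c j * relu (a \<bullet> x i - a \<bullet> x j)"]
      by (simp add: lessThan_atLeast0)
    also have "(\<Sum>j\<in>J. c j * relu (t i - t j)) = (\<Sum>j\<in>{1..K-1}. c j * relu (t i - t j))"
      unfolding J_def by (rule sum.mono_neutral_left) (auto simp: cZ Z_def)
    also have "\<dots> = (\<Sum>j\<in>{1..<i}. c j * (t i - t j))"
    proof -
      have mono: "t j \<le> t k" if "1 \<le> j" "j \<le> k" "k \<le> K" for j k
        using that(2)
      proof (induction k rule: dec_induct)
        case base then show ?case by simp
      next
        case (step n) then show ?case using tinc[of n] that by linarith
      qed
      have "(\<Sum>j\<in>{1..K-1}. c j * relu (t i - t j)) = (\<Sum>j\<in>{1..<i}. c j * relu (t i - t j))"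
        by (rule sum.mono_neutral_right) (use that mono in \<open>auto simp: relu_def\<close>)
      also have "\<dots> = (\<Sum>j\<in>{1..<i}. c j * (t i - t j))"
        by (rule sum.cong) (use that mono in \<open>auto simp: relu_def\<close>)
      finally show ?thesis .
    qed
    finally show ?thesis using H[OF that] by simp
  qed
  define f where "f P = P - {Min P, Max P}" for P :: "nat set"
  have finC: "finite (consec_partition I)"
  proof (rule finite_subset)
    show "consec_partition I \<subseteq> Pow {1..K}"
      unfolding consec_partition_def I_def by auto
  qed simp
  have fZ: "f P \<subseteq> Z" if PC: "P \<in> consec_partition I" for P
  proof -
    obtain l u where P: "P = {l..u}" "l \<le> u" "{l..u} \<subseteq> I" using cp_elem[OF PC] by blast
    have "Min P = l" using P by (intro Min_eqI) auto
    moreover have "Max P = u" using P by (intro Max_eqI) auto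
    ultimately have fp: "f P = {l<..<u}" using P by (auto simp: f_def)
    have "I \<subseteq> {1..K}" unfolding I_def by auto
    then show ?thesis unfolding fp Z_def using P by fastforce
  qed
  have sumeq: "(\<Sum>P\<in>consec_partition I. max (int (card P) - 2) 0) = int (card (\<Union>P\<in>consec_partition I. f P))"
  proof -
    have "(\<Sum>P\<in>consec_partition I. max (int (card P) - 2) 0) = (\<Sum>P\<in>consec_partition I. int (card (f P)))"
    proof (rule sum.cong)
      fix P assume "P \<in> consec_partition I"
      then obtain l u where "P = {l..u}" "l \<le> u" using cp_elem by metis
      then show "max (int (card P) - 2) 0 = int (card (f P))" using card_inner f_def by metis
    qed simp
    also have "\<dots> = int (\<Sum>P\<in>consec_partition I. card (f P))" by simp
    also have "(\<Sum>P\<in>consec_partition I. card (f P)) = card (\<Union>P\<in>consec_partition I. f P)"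
    proof (rule card_UN_disjoint[symmetric])
      show "finite (consec_partition I)" by (rule finC)
      show "\<forall>P\<in>consec_partition I. finite (f P)"
        using finite_subset[OF fZ] unfolding Z_def by auto
      show "\<forall>P\<in>consec_partition I. \<forall>Q\<in>consec_partition I. P \<noteq> Q \<longrightarrow> f P \<inter> f Q = {}"
        using cp_disj unfolding f_def by blast
    qed
    finally show ?thesis .
  qed
  have cardZ: "card (\<Union>P\<in>consec_partition I. f P) \<le> card Z"
  proof (rule card_mono)
    show "finite Z" unfolding Z_def by simp
    show "(\<Union>P\<in>consec_partition I. f P) \<subseteq> Z" using fZ by blast
  qed
  have ZK: "Z \<subseteq> {1..K-1}" unfolding Z_def by auto
  have "card J = (K - 1) - card Z" unfolding J_def using card_Diff_subset[OF finite_subset[OF ZK] ZK] by simp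
  moreover have "card Z \<le> K - 1" using card_mono[OF _ ZK] by simp
  ultimately have mb: "int m = int K - 1 - int (card Z)" using assms(1) unfolding m_def by linarith
  show ?thesis
  proof (intro exI conjI ballI)
    show "int m \<le> int K - 1 - (\<Sum>P\<in>consec_partition ({1..K} - T). max (int (card P) - 2) 0)"
      using mb sumeq cardZ unfolding I_def by linarith
  next
    fix i assume "i \<in> T"
    then show "net m W2 b1 (y 1) a (x i) = z i" using netv[of i] assms(2) y_def by auto
  next
    fix i assume "i \<in> {1..K} - T"
    then show "net m W2 b1 (y 1) a (x i) = 0" using netv[of i] y_def by auto
  qed
qed

end
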